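(* Let $p,q\in\mathbb{N}$ be co-prime and $\theta=\tan^{-1}(p/q)$. Then the measure $\mu_\theta$ is singular with respect to Lebesgue measure.
   Context: Throughout, $p,q\in\mathbb{N}$ are co-prime with $p/q\in[0,1]$. Let $D=\{0,1,p/q\}$. The measure $\mu_\theta$ is the unique Borel probability measure on $\mathbb{R}$ satisfying $\mu_\theta(A)=\tfrac13\big(\mu_\theta(2A)+\mu_\theta(2A-1)+\mu_\theta(2A-p/q)\big)$ for all Borel $A$; equivalently, $\mu_\theta$ is the distribution of $\sum_{i\ge1}a_i2^{-i}$ where $a_1,a_2,\dots$ are i.i.d. uniformly distributed on $D$. (Equivalently, it is the push-forward of the natural uniform (fair Bernoulli) measure on the Sierpinski triangle with vertices $(0,0),(1,0),(0,1)$ under the projection $(x,y)\mapsto x+\frac pq y$.) *)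

theory Defs
  imports "HOL-Probability.Probability"
begin

text \<open>The three digits of D = {0, 1, p/q}, indexed by 0, 1, 2 (so that when p/q is 0 or 1
  the repeated digit correctly carries weight 2/3).\<close>
definition digit :: "nat \<Rightarrow> nat \<Rightarrow> nat \<Rightarrow> real" where
  "digit p q k = (if k = 0 then 0 else if k = 1 then 1 else real p / real q)"

definition mu :: "nat \<Rightarrow> nat \<Rightarrow> real measure" where
  "mu p q = distr (PiM UNIV (\<lambda>_::nat. uniform_count_measure {0::nat, 1, 2})) borel
              (\<lambda>a. \<Sum>i. digit p q (a i) / 2 ^ (Suc i))"

definition singular_lebesgue :: "real measure \<Rightarrow> bool" where
  "singular_lebesgue M \<longleftrightarrow>
     (\<exists>A \<in> sets borel. emeasure M A = 0 \<and> emeasure lborel (UNIV - A) = 0)"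

end

theory Submission
  imports Defs
begin
lemma cos_lip: fixes x y :: real shows "\<bar>cos x - cos y\<bar> \<le> \<bar>x - y\<bar>"
proof -
  have "\<bar>cos x - cos y\<bar> = 2 * \<bar>sin ((x + y) / 2)\<bar> * \<bar>sin ((y - x) / 2)\<bar>"
    by (simp add: cos_diff_cos abs_mult)
  also have "\<dots> \<le> 2 * 1 * \<bar>(y - x) / 2\<bar>"
    by (intro mult_mono abs_sin_x_le_abs_x) auto
  finally show ?thesis by simp
qed

lemma cos_per: fixes x :: real shows "cos (2 * pi * of_int z + x) = cos x"
  by (simp add: cos_add cos_int_2pin sin_int_2pin)

lemma geo_aux:
  "(\<Sum>n<N. (1/2::real) ^ (if m \<le> n then n - m else m - n))
     \<le> (if N \<le> m then (1/2) ^ (m - N) else 3 - 2 * (1/2) ^ (N - m))"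
proof (induction N)
  case 0
  then show ?case by simp
next
  case (Suc N)
  have S: "(\<Sum>n<Suc N. (1/2::real) ^ (if m \<le> n then n - m else m - n))
     = (\<Sum>n<N. (1/2::real) ^ (if m \<le> n then n - m else m - n)) + (1/2) ^ (if m \<le> N then N - m else m - N)"
    by simp
  consider "Suc N \<le> m" | "N = m" | "m < N" by linarith
  then show ?case
  proof cases
    case 1
    then have "m - N = Suc (m - Suc N)" by simp
    then show ?thesis using Suc 1 S by simp
  next
    case 2
    then show ?thesis using Suc S by simp
  next
    case 3
    then have "Suc N - m = Suc (N - m)" by simp
    then show ?thesis using Suc 3 S by simp
  qed
qed

lemma geo: "(\<Sum>n<N. (1/2::real) ^ (if m \<le> n then n - m else m - n)) \<le> 3"
proof -
  have "(1/2::real) ^ (m - N) \<le> 1" by (simp add: power_le_one)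
  show ?thesis
  proof (cases "N \<le> m")
    case True
    then show ?thesis using geo_aux[where N=N and m=m] \<open>(1/2::real) ^ (m - N) \<le> 1\<close> by simp
  next
    case False
    then have "(\<Sum>n<N. (1/2::real) ^ (if m \<le> n then n - m else m - n)) \<le> 3 - 2 * (1/2) ^ (N - m)"
      using geo_aux[where N=N and m=m] by simp
    moreover have "0 \<le> (1/2::real) ^ (N - m)" by simp
    ultimately show ?thesis by linarith
  qed
qed


lemma cis_meas[measurable]: "cis \<in> borel_measurable borel"
  unfolding cis_conv_exp by (intro borel_measurable_continuous_onI continuous_intros)

lemma cos_dbl_iter: fixes x :: real assumes "cos x = - 1/2" shows "cos (2 ^ k * x) = - 1/2"
proof (induction k)
  case 0
  then show ?case using assms by simp
next
  case (Suc k)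
  have "cos (2 ^ Suc k * x) = cos (2 * (2 ^ k * x))" by (simp add: mult.assoc)
  also have "\<dots> = 2 * (cos (2 ^ k * x))\<^sup>2 - 1" by (rule cos_double_cos)
  also have "\<dots> = - 1/2" using Suc by (simp add: power2_eq_square)
  finally show ?case .
qed

lemma cos_dyadic: "cos (2 * pi * real (q::nat) / 2 ^ k) \<noteq> - 1/2"
proof
  assume "cos (2 * pi * real q / 2 ^ k) = - 1/2"
  from cos_dbl_iter[OF this, of k] have "cos (2 * pi * real_of_int (int q)) = - 1/2" by simp
  then show False using cos_int_2pin[of "int q"] by simp
qed

lemma three_ne: fixes a b :: real assumes "cos a \<noteq> - 1/2" shows "1 + cis a + cis b \<noteq> 0"
proof
  assume h: "1 + cis a + cis b = 0"
  have re: "1 + cos a + cos b = 0" using arg_cong[OF h, of Re] by simp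
  have im: "sin a + sin b = 0" using arg_cong[OF h, of Im] by simp
  have "(cos b)\<^sup>2 = (cos a)\<^sup>2"
  proof -
    have "sin b = - sin a" using im by linarith
    then have "(sin b)\<^sup>2 = (sin a)\<^sup>2" by simp
    then show ?thesis by (simp add: cos_squared_eq)
  qed
  moreover have "cos b = - 1 - cos a" using re by linarith
  ultimately have "(1 + cos a)\<^sup>2 = (cos a)\<^sup>2" by (simp add: power2_eq_square algebra_simps)
  then have "cos a = - 1/2" by (simp add: power2_eq_square algebra_simps)
  with assms show False by simp
qed


lemma cos_int01:
  fixes k :: int and \<psi> :: real
  shows "((\<lambda>x. cos (2 * pi * of_int k * x + \<psi>)) has_integral (if k = 0 then cos \<psi> else 0)) {0..1}"
proof (cases "k = 0")
  case True
  then show ?thesis using has_integral_const_real[of "cos \<psi>" 0 1] by simp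
next
  case False
  define F where "F x = sin (2 * pi * of_int k * x + \<psi>) / (2 * pi * of_int k)" for x :: real
  have d: "(F has_vector_derivative cos (2 * pi * of_int k * x + \<psi>)) (at x within {0..1})" for x
  proof -
    have "(F has_real_derivative cos (2 * pi * of_int k * x + \<psi>) * (2 * pi * of_int k * 1 + 0) / (2 * pi * of_int k)) (at x within {0..1})"
      unfolding F_def using False by (intro derivative_eq_intros) auto
    then show ?thesis using False by (simp add: has_real_derivative_iff_has_vector_derivative)
  qed
  have "F 1 - F 0 = 0"
    unfolding F_def by (simp add: sin_add sin_int_2pin cos_int_2pin mult.assoc[symmetric] diff_divide_distrib[symmetric])
  then show ?thesis
    using fundamental_theorem_of_calculus[of 0 1 F "\<lambda>x. cos (2 * pi * of_int k * x + \<psi>)", OF _ d] False by simp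
qed

definition Ls :: "nat \<Rightarrow> nat \<Rightarrow> real \<Rightarrow> real \<Rightarrow> real" where
  "Ls q N \<phi> x = (\<Sum>n<N. cos (2 * pi * 2 ^ n * (real q * x) + \<phi>))"

lemma term_int:
  assumes q: "0 < q"
  shows "((\<lambda>x. cos (2 * pi * 2 ^ m * (real q * x) + \<phi>) * cos (2 * pi * 2 ^ n * (real q * x) + \<phi>))
            has_integral (if m = n then 1/2 else 0)) {0..1}"
proof -
  define km :: int where "km = 2 ^ m * int q"
  define kn :: int where "kn = 2 ^ n * int q"
  have f: "cos (2 * pi * 2 ^ m * (real q * x) + \<phi>) * cos (2 * pi * 2 ^ n * (real q * x) + \<phi>)
     = (cos (2 * pi * of_int (km - kn) * x + 0) + cos (2 * pi * of_int (km + kn) * x + 2 * \<phi>)) * (1/2)" for x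
    unfolding cos_times_cos km_def kn_def by (simp add: algebra_simps)
  have pos: "km + kn \<noteq> 0" using q unfolding km_def kn_def
    by (metis add_pos_pos less_numeral_extra(3) of_nat_0_less_iff zero_less_mult_iff zero_less_numeral zero_less_power)
  have eq: "km - kn = 0 \<longleftrightarrow> m = n"
  proof
    assume "km - kn = 0"
    then have "(2::int) ^ m = 2 ^ n" using q unfolding km_def kn_def by simp
    then show "m = n" by (simp add: power_inject_exp)
  qed (simp add: km_def kn_def)
  have I: "((\<lambda>x. (cos (2 * pi * of_int (km - kn) * x + 0) + cos (2 * pi * of_int (km + kn) * x + 2 * \<phi>)) * (1/2))
     has_integral ((if km - kn = 0 then cos 0 else 0) + (if km + kn = 0 then cos (2 * \<phi>) else 0)) * (1/2)) {0..1}"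
    by (intro has_integral_mult_left has_integral_add cos_int01)
  have v: "((if km - kn = 0 then cos 0 else 0) + (if km + kn = 0 then cos (2 * \<phi>) else 0)) * (1/2)
      = (if m = n then 1/2 else (0::real))"
    using pos eq by simp
  have F: "(\<lambda>x. cos (2 * pi * 2 ^ m * (real q * x) + \<phi>) * cos (2 * pi * 2 ^ n * (real q * x) + \<phi>))
     = (\<lambda>x. (cos (2 * pi * of_int (km - kn) * x + 0) + cos (2 * pi * of_int (km + kn) * x + 2 * \<phi>)) * (1/2))"
    by (rule ext) (rule f)
  show ?thesis unfolding F using I unfolding v .
qed

lemma L2_int:
  assumes q: "0 < q"
  shows "((\<lambda>x. (Ls q N \<phi> x)\<^sup>2) has_integral (real N / 2)) {0..1}"
proof -
  have sq: "(Ls q N \<phi> x)\<^sup>2 = (\<Sum>m<N. \<Sum>n<N. cos (2 * pi * 2 ^ m * (real q * x) + \<phi>) * cos (2 * pi * 2 ^ n * (real q * x) + \<phi>))" for x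
    unfolding Ls_def by (simp add: power2_eq_square sum_product)
  have "((\<lambda>x. \<Sum>m<N. \<Sum>n<N. cos (2 * pi * 2 ^ m * (real q * x) + \<phi>) * cos (2 * pi * 2 ^ n * (real q * x) + \<phi>))
     has_integral (\<Sum>m<N. \<Sum>n<N. (if m = n then 1/2 else 0))) {0..1}"
    by (intro has_integral_sum term_int q finite_lessThan)
  moreover have "(\<Sum>m<N. \<Sum>n<N. (if m = n then 1/2 else 0::real)) = real N / 2"
    by simp
  ultimately show ?thesis by (simp add: sq)
qed

lemma Ls_cont: "continuous_on A (\<lambda>x. (Ls q N \<phi> x)\<^sup>2)"
  unfolding Ls_def by (intro continuous_intros)

lemma L2_lborel:
  assumes q: "0 < q"
  shows "integrable lborel (\<lambda>x. indicator {0..1} x * (Ls q N \<phi> x)\<^sup>2)"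
    and "(\<integral>x. indicator {0..1} x * (Ls q N \<phi> x)\<^sup>2 \<partial>lborel) = real N / 2"
proof -
  show i: "integrable lborel (\<lambda>x. indicator {0..1} x * (Ls q N \<phi> x)\<^sup>2)"
    using borel_integrable_compact[OF compact_Icc Ls_cont, of 0 1 q N \<phi>] by simp
  have "((\<lambda>x. indicator {0..1} x * (Ls q N \<phi> x)\<^sup>2) has_integral (real N / 2)) UNIV"
  proof -
    have e: "(\<lambda>x. indicator {0..1} x * (Ls q N \<phi> x)\<^sup>2) = (\<lambda>x. if x \<in> {0..1} then (Ls q N \<phi> x)\<^sup>2 else 0)"
      by (auto simp: fun_eq_iff)
    show ?thesis unfolding e has_integral_restrict_UNIV by (rule L2_int[OF q])
  qed
  moreover have "((\<lambda>x. indicator {0..1} x * (Ls q N \<phi> x)\<^sup>2) has_integral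
       (\<integral>x. indicator {0..1} x * (Ls q N \<phi> x)\<^sup>2 \<partial>lborel)) UNIV"
    by (rule has_integral_integral_lborel[OF i])
  ultimately show "(\<integral>x. indicator {0..1} x * (Ls q N \<phi> x)\<^sup>2 \<partial>lborel) = real N / 2"
    using has_integral_unique by blast
qed


lemma sq_aux: fixes T K t :: real assumes "t = \<bar>K\<bar>/2" "T\<^sup>2 < t\<^sup>2" shows "t\<^sup>2 \<le> (T - K)\<^sup>2"
proof -
  have t0: "0 \<le> t" using assms by simp
  have "\<bar>T\<bar> < t" using assms(2) t0 by (metis power2_less_imp_less power2_abs)
  then have "t \<le> \<bar>T - K\<bar>" using assms(1) by linarith
  then have "\<bar>t\<bar> \<le> \<bar>T - K\<bar>" using t0 by simp
  then show ?thesis by (simp add: abs_le_square_iff)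
qed

lemma limsup_compl: "UNIV - limsup A \<subseteq> limsup (\<lambda>k. UNIV - A k)"
  apply (auto simp: limsup_INF_SUP)
  by (metis atLeast_iff max.cobounded1 max.cobounded2)

locale dig =
  fixes p q :: nat
  assumes qpos: "0 < q" and pq: "p \<le> q"
begin

definition U :: "nat measure" where "U = uniform_count_measure {0::nat, 1, 2}"
definition ev :: "nat \<Rightarrow> real" where
  "ev k = (if k = 0 then 0 else if k = 1 then real q else real p)"
definition Y :: "(nat \<Rightarrow> nat) \<Rightarrow> real" where
  "Y \<omega> = (\<Sum>i. ev (\<omega> i) / 2 ^ Suc i)"
definition Yp :: "nat \<Rightarrow> (nat \<Rightarrow> nat) \<Rightarrow> real" where
  "Yp n \<omega> = (\<Sum>i<n. ev (\<omega> i) / 2 ^ Suc i)"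

lemma ev_bounds: "0 \<le> ev k" "ev k \<le> real q"
  using pq by (auto simp: ev_def)

lemma U_prob: "prob_space U"
  unfolding U_def by (rule prob_space_uniform_count_measure) auto

lemma seq: "sequence_space U"
proof -
  interpret prob_space U by (rule U_prob)
  show ?thesis
    by (simp add: sequence_space_def product_prob_space_def product_sigma_finite_def
        product_prob_space_axioms_def prob_space_axioms sigma_finite_measure_axioms)
qed

lemma ev_meas[measurable]: "ev \<in> borel_measurable U"
proof -
  have "sets U = sets (count_space {0::nat,1,2})"
    unfolding U_def by (rule sets_uniform_count_measure_count_space)
  then have "borel_measurable U = borel_measurable (count_space {0::nat,1,2})"
    by (rule measurable_cong_sets) simp
  then show ?thesis
    using borel_measurable_count_space[of ev "{0::nat,1,2}"] by blast
qed

end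

sublocale dig \<subseteq> sequence_space U
  by (rule seq)

context dig
begin

lemma summ: "summable (\<lambda>i. ev (\<omega> i) / 2 ^ Suc i)"
proof (rule summable_comparison_test[where g = "\<lambda>i. real q * (1/2) ^ Suc i"])
  show "\<exists>N. \<forall>n\<ge>N. norm (ev (\<omega> n) / 2 ^ Suc n) \<le> real q * (1 / 2) ^ Suc n"
    using ev_bounds by (auto simp: power_divide divide_right_mono)
  show "summable (\<lambda>i. real q * (1 / 2) ^ Suc i)"
    by (intro summable_mult summable_geometric_iff[THEN iffD2, THEN summable_Suc_iff[THEN iffD2]]) auto
qed

lemma Y_nonneg: "0 \<le> Y \<omega>"
  unfolding Y_def by (intro suminf_nonneg summ) (simp add: ev_bounds)

lemma Y_le: "Y \<omega> \<le> real q"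
proof -
  have "Y \<omega> \<le> (\<Sum>i. real q * (1/2) ^ Suc i)"
    unfolding Y_def
    by (intro suminf_le summ summable_mult summable_geometric_iff[THEN iffD2, THEN summable_Suc_iff[THEN iffD2]])
       (auto simp: ev_bounds power_divide divide_right_mono)
  also have "\<dots> = real q"
  proof -
    have "(\<lambda>i. (1/2::real) ^ Suc i) sums 1"
      by (rule power_half_series)
    then have "(\<lambda>i. real q * (1/2::real) ^ Suc i) sums (real q * 1)"
      by (rule sums_mult)
    then show ?thesis by (simp add: sums_iff)
  qed
  finally show ?thesis .
qed

lemma Y_comb: "Y (comb_seq n \<omega> \<omega>') = Yp n \<omega> + Y \<omega>' / 2 ^ n"
proof -
  have "Y (comb_seq n \<omega> \<omega>') = (\<Sum>i. ev (comb_seq n \<omega> \<omega>' (i + n)) / 2 ^ Suc (i + n))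
        + (\<Sum>i<n. ev (comb_seq n \<omega> \<omega>' i) / 2 ^ Suc i)"
    unfolding Y_def by (rule suminf_split_initial_segment[OF summ])
  also have "(\<Sum>i<n. ev (comb_seq n \<omega> \<omega>' i) / 2 ^ Suc i) = Yp n \<omega>"
    unfolding Yp_def by (intro sum.cong) (auto simp: comb_seq_less)
  also have "(\<Sum>i. ev (comb_seq n \<omega> \<omega>' (i + n)) / 2 ^ Suc (i + n)) = (\<Sum>i. (ev (\<omega>' i) / 2 ^ Suc i) / 2 ^ n)"
    by (intro suminf_cong) (simp add: comb_seq_add power_add)
  also have "\<dots> = Y \<omega>' / 2 ^ n"
    unfolding Y_def using suminf_divide[OF summ[of \<omega>'], of "2^n"] by simp
  finally show ?thesis by simp
qed

lemma Yp_int: "\<exists>z::int. 2 ^ n * Yp n \<omega> = of_int z"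
proof (induction n)
  case 0
  then show ?case by (simp add: Yp_def)
next
  case (Suc n)
  then obtain z :: int where z: "2 ^ n * Yp n \<omega> = of_int z" by blast
  have e: "\<exists>k::int. ev (\<omega> n) = of_int k"
    by (auto simp: ev_def intro: exI[of _ "int q"] exI[of _ "int p"] exI[of _ 0])
  then obtain k :: int where k: "ev (\<omega> n) = of_int k" by blast
  have "2 ^ Suc n * Yp (Suc n) \<omega> = 2 * (2 ^ n * Yp n \<omega>) + ev (\<omega> n)"
    by (simp add: Yp_def algebra_simps)
  also have "\<dots> = of_int (2 * z + k)" using z k by simp
  finally show ?case by blast
qed

lemma Y_meas[measurable]: "Y \<in> borel_measurable S"
  unfolding Y_def by measurable

lemma Yp_meas[measurable]: "Yp n \<in> borel_measurable S"
  unfolding Yp_def by measurable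

lemma S_prob: "prob_space S"
  by (rule prob_space_PiM) (rule U_prob)

lemma PS: "pair_prob_space S S"
  by (simp add: pair_prob_space_def pair_sigma_finite_def S_prob prob_space_imp_sigma_finite)

lemma int_bnd:
  fixes f :: "(nat \<Rightarrow> nat) \<Rightarrow> real"
  assumes "f \<in> borel_measurable S" "\<And>\<omega>. \<omega> \<in> space S \<Longrightarrow> \<bar>f \<omega>\<bar> \<le> B"
  shows "integrable S f"
  using assms by (intro P.integrable_const_bound[where B=B]) auto

lemma int_close:
  fixes f g :: "(nat \<Rightarrow> nat) \<Rightarrow> real"
  assumes "integrable S f" "integrable S g" "\<And>\<omega>. \<omega> \<in> space S \<Longrightarrow> \<bar>f \<omega> - g \<omega>\<bar> \<le> e"
  shows "\<bar>integral\<^sup>L S f - integral\<^sup>L S g\<bar> \<le> e"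
proof -
  have "integral\<^sup>L S f - integral\<^sup>L S g = integral\<^sup>L S (\<lambda>\<omega>. f \<omega> - g \<omega>)"
    using assms by (simp add: integral_diff)
  also have "\<bar>\<dots>\<bar> \<le> integral\<^sup>L S (\<lambda>\<omega>. e)"
  proof -
    have "\<bar>integral\<^sup>L S (\<lambda>\<omega>. f \<omega> - g \<omega>)\<bar> \<le> integral\<^sup>L S (\<lambda>\<omega>. \<bar>f \<omega> - g \<omega>\<bar>)"
      by (rule integral_abs_bound)
    also have "\<dots> \<le> integral\<^sup>L S (\<lambda>\<omega>. e)"
      using assms by (intro integral_mono) auto
    finally show ?thesis .
  qed
  also have "\<dots> = e"
    using S_prob by (simp add: prob_space.prob_space)
  finally show ?thesis .
qed

lemma split_int:
  fixes f :: "(nat \<Rightarrow> nat) \<Rightarrow> real"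
  assumes f[measurable]: "f \<in> borel_measurable S" and bnd: "\<And>\<omega>. \<bar>f \<omega>\<bar> \<le> B"
  shows "integral\<^sup>L S f = (\<integral>\<omega>. (\<integral>\<omega>'. f (comb_seq n \<omega> \<omega>') \<partial>S) \<partial>S)"
proof -
  interpret PS: pair_prob_space S S by (rule PS)
  have "integral\<^sup>L S f = integral\<^sup>L (distr (S \<Otimes>\<^sub>M S) S (\<lambda>(\<omega>, \<omega>'). comb_seq n \<omega> \<omega>')) f"
    by (simp add: PiM_comb_seq)
  also have "\<dots> = integral\<^sup>L (S \<Otimes>\<^sub>M S) (\<lambda>x. f ((\<lambda>(\<omega>, \<omega>'). comb_seq n \<omega> \<omega>') x))"
    by (rule integral_distr[OF measurable_comb_seq f])
  also have "\<dots> = integral\<^sup>L (S \<Otimes>\<^sub>M S) (\<lambda>(\<omega>, \<omega>'). f (comb_seq n \<omega> \<omega>'))"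
    by (simp add: case_prod_beta')
  also have "\<dots> = (\<integral>\<omega>. (\<integral>\<omega>'. f (comb_seq n \<omega> \<omega>') \<partial>S) \<partial>S)"
  proof (rule PS.integral_fst[symmetric])
    show "integrable (S \<Otimes>\<^sub>M S) (\<lambda>(\<omega>, \<omega>'). f (comb_seq n \<omega> \<omega>'))"
    proof (rule finite_measure.integrable_const_bound[where B=B])
      show "finite_measure (S \<Otimes>\<^sub>M S)"
        by (simp add: PS.P.finite_measure_axioms)
      show "AE x in S \<Otimes>\<^sub>M S. norm ((\<lambda>(\<omega>, \<omega>'). f (comb_seq n \<omega> \<omega>')) x) \<le> B"
        using bnd by (auto simp: case_prod_beta')
      show "(\<lambda>(\<omega>, \<omega>'). f (comb_seq n \<omega> \<omega>')) \<in> borel_measurable (S \<Otimes>\<^sub>M S)"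
        by measurable
    qed
  qed
  finally show ?thesis .
qed

lemma comb_meas: "\<omega> \<in> space S \<Longrightarrow> (\<lambda>\<omega>'. comb_seq n \<omega> \<omega>') \<in> measurable S S"
  by (intro measurable_comb_seq' measurable_const measurable_ident_sets) auto

lemma inner_meas:
  fixes f :: "(nat \<Rightarrow> nat) \<Rightarrow> (nat \<Rightarrow> nat) \<Rightarrow> real"
  assumes [measurable]: "case_prod f \<in> borel_measurable (S \<Otimes>\<^sub>M S)"
  shows "(\<lambda>\<omega>. \<integral>\<omega>'. f \<omega> \<omega>' \<partial>S) \<in> borel_measurable S"
  by (rule P.borel_measurable_lebesgue_integral) simp

lemma abs_int_le:
  fixes h :: "(nat \<Rightarrow> nat) \<Rightarrow> real"
  assumes "h \<in> borel_measurable S" "\<And>\<omega>. \<omega> \<in> space S \<Longrightarrow> \<bar>h \<omega>\<bar> \<le> B"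
  shows "\<bar>integral\<^sup>L S h\<bar> \<le> B"
  using int_close[of h "\<lambda>_. 0" B] int_bnd[of h B] assms by simp

definition kap :: "real \<Rightarrow> real" where
  "kap \<phi> = (\<integral>\<omega>. cos (2 * pi * Y \<omega> + \<phi>) \<partial>S)"

lemma kap_bnd: "\<bar>kap \<phi>\<bar> \<le> 1"
  unfolding kap_def by (rule abs_int_le) auto

lemma per_comb: "cos (2 * pi * 2 ^ n * Y (comb_seq n \<omega> \<omega>') + \<phi>) = cos (2 * pi * Y \<omega>' + \<phi>)"
proof -
  obtain z where z: "2 ^ n * Yp n \<omega> = of_int z" using Yp_int by blast
  have "2 ^ n * Y (comb_seq n \<omega> \<omega>') = of_int z + Y \<omega>'"
    using z by (simp add: Y_comb distrib_left)
  then have "2 * pi * 2 ^ n * Y (comb_seq n \<omega> \<omega>') + \<phi> = 2 * pi * of_int z + (2 * pi * Y \<omega>' + \<phi>)"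
    by (metis (no_types, opaque_lifting) distrib_left mult.assoc add.assoc)
  then show ?thesis by (simp only: cos_per)
qed

lemma stat: "(\<integral>\<omega>. cos (2 * pi * 2 ^ n * Y \<omega> + \<phi>) \<partial>S) = kap \<phi>"
proof -
  have "(\<integral>\<omega>. cos (2 * pi * 2 ^ n * Y \<omega> + \<phi>) \<partial>S)
      = (\<integral>\<omega>. (\<integral>\<omega>'. cos (2 * pi * 2 ^ n * Y (comb_seq n \<omega> \<omega>') + \<phi>) \<partial>S) \<partial>S)"
    by (rule split_int[where B=1]) auto
  also have "\<dots> = (\<integral>\<omega>. kap \<phi> \<partial>S)"
    by (simp add: per_comb kap_def)
  also have "\<dots> = kap \<phi>"
    by (simp add: P.prob_space)
  finally show ?thesis .
qed

lemma cov:
  assumes mn: "m \<le> n"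
  shows "\<bar>(\<integral>\<omega>. cos (2 * pi * 2 ^ m * Y \<omega> + \<phi>) * cos (2 * pi * 2 ^ n * Y \<omega> + \<phi>) \<partial>S) - kap \<phi> ^ 2\<bar>
         \<le> 4 * pi * real q / 2 ^ (n - m)"
proof -
  define \<delta> where "\<delta> = 2 * pi * real q / 2 ^ (n - m)"
  define A where "A \<omega> = cos (2 * pi * 2 ^ m * Yp n \<omega> + \<phi>)" for \<omega>
  define G where "G \<omega> \<omega>' = cos (2 * pi * 2 ^ m * Y (comb_seq n \<omega> \<omega>') + \<phi>)" for \<omega> \<omega>'
  define C where "C \<omega>' = cos (2 * pi * Y \<omega>' + \<phi>)" for \<omega>'
  have [measurable]: "A \<in> borel_measurable S" "C \<in> borel_measurable S"
    "case_prod G \<in> borel_measurable (S \<Otimes>\<^sub>M S)"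
    unfolding A_def C_def G_def by measurable
  have Ab: "\<bar>A \<omega>\<bar> \<le> 1" and Cb: "\<bar>C \<omega>\<bar> \<le> 1" and Gb: "\<bar>G \<omega> \<omega>'\<bar> \<le> 1" for \<omega> \<omega>'
    by (auto simp: A_def C_def G_def)
  have key: "\<bar>G \<omega> \<omega>' - A \<omega>\<bar> \<le> \<delta>" for \<omega> \<omega>'
  proof -
    have p2: "(2::real) ^ n = 2 ^ m * 2 ^ (n - m)"
      using mn by (simp add: power_add[symmetric])
    have e: "(2 * pi * 2 ^ m * Y (comb_seq n \<omega> \<omega>') + \<phi>) - (2 * pi * 2 ^ m * Yp n \<omega> + \<phi>)
        = 2 * pi * (Y \<omega>' / 2 ^ (n - m))"
      by (simp add: Y_comb p2 algebra_simps)
    have "\<bar>G \<omega> \<omega>' - A \<omega>\<bar> \<le> \<bar>2 * pi * (Y \<omega>' / 2 ^ (n - m))\<bar>"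
      unfolding G_def A_def using cos_lip e by metis
    also have "\<dots> = 2 * pi * (Y \<omega>' / 2 ^ (n - m))"
      using Y_nonneg by simp
    also have "\<dots> \<le> 2 * pi * (real q / 2 ^ (n - m))"
      using Y_le by (intro mult_left_mono divide_right_mono) auto
    finally show ?thesis by (simp add: \<delta>_def)
  qed
  have Gm[measurable]: "G \<omega> \<in> borel_measurable S" if "\<omega> \<in> space S" for \<omega>
    unfolding G_def by (rule measurable_compose[OF comb_meas[OF that]]) measurable
  have I1: "(\<integral>\<omega>. cos (2 * pi * 2 ^ m * Y \<omega> + \<phi>) * cos (2 * pi * 2 ^ n * Y \<omega> + \<phi>) \<partial>S)
      = (\<integral>\<omega>. (\<integral>\<omega>'. G \<omega> \<omega>' * C \<omega>' \<partial>S) \<partial>S)"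
  proof -
    have "(\<integral>\<omega>. cos (2 * pi * 2 ^ m * Y \<omega> + \<phi>) * cos (2 * pi * 2 ^ n * Y \<omega> + \<phi>) \<partial>S)
      = (\<integral>\<omega>. (\<integral>\<omega>'. cos (2 * pi * 2 ^ m * Y (comb_seq n \<omega> \<omega>') + \<phi>) * cos (2 * pi * 2 ^ n * Y (comb_seq n \<omega> \<omega>') + \<phi>) \<partial>S) \<partial>S)"
      by (rule split_int[where B=1]) (auto simp: abs_mult intro: mult_le_one)
    then show ?thesis by (simp add: per_comb G_def C_def)
  qed
  have I2: "kap \<phi> = (\<integral>\<omega>. (\<integral>\<omega>'. G \<omega> \<omega>' \<partial>S) \<partial>S)"
  proof -
    have "(\<integral>\<omega>. cos (2 * pi * 2 ^ m * Y \<omega> + \<phi>) \<partial>S)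
      = (\<integral>\<omega>. (\<integral>\<omega>'. cos (2 * pi * 2 ^ m * Y (comb_seq n \<omega> \<omega>') + \<phi>) \<partial>S) \<partial>S)"
      by (rule split_int[where B=1]) auto
    then show ?thesis by (simp add: stat G_def)
  qed
  have meas1: "(\<lambda>\<omega>. \<integral>\<omega>'. G \<omega> \<omega>' * C \<omega>' \<partial>S) \<in> borel_measurable S"
    by (rule inner_meas) measurable
  have meas2: "(\<lambda>\<omega>. \<integral>\<omega>'. G \<omega> \<omega>' \<partial>S) \<in> borel_measurable S"
    by (rule inner_meas) measurable
  have in1: "\<bar>(\<integral>\<omega>'. G \<omega> \<omega>' * C \<omega>' \<partial>S) - A \<omega> * kap \<phi>\<bar> \<le> \<delta>" if w: "\<omega> \<in> space S" for \<omega>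
  proof -
    have "A \<omega> * kap \<phi> = (\<integral>\<omega>'. A \<omega> * C \<omega>' \<partial>S)"
      by (simp add: kap_def C_def)
    moreover have "\<bar>(\<integral>\<omega>'. G \<omega> \<omega>' * C \<omega>' \<partial>S) - (\<integral>\<omega>'. A \<omega> * C \<omega>' \<partial>S)\<bar> \<le> \<delta>"
    proof (rule int_close)
      show "integrable S (\<lambda>\<omega>'. G \<omega> \<omega>' * C \<omega>')"
        using w Gb Cb by (intro int_bnd[where B=1]) (auto simp: abs_mult intro: mult_le_one)
      show "integrable S (\<lambda>\<omega>'. A \<omega> * C \<omega>')"
        using Ab Cb by (intro int_bnd[where B=1]) (auto simp: abs_mult intro: mult_le_one)
      fix \<omega>' show "\<bar>G \<omega> \<omega>' * C \<omega>' - A \<omega> * C \<omega>'\<bar> \<le> \<delta>"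
      proof -
        have "\<bar>G \<omega> \<omega>' * C \<omega>' - A \<omega> * C \<omega>'\<bar> = \<bar>G \<omega> \<omega>' - A \<omega>\<bar> * \<bar>C \<omega>'\<bar>"
          by (simp add: abs_mult[symmetric] left_diff_distrib)
        also have "\<dots> \<le> \<delta> * 1"
          using key Cb by (intro mult_mono) (auto simp: \<delta>_def)
        finally show ?thesis by simp
      qed
    qed
    ultimately show ?thesis by metis
  qed
  have in2: "\<bar>(\<integral>\<omega>'. G \<omega> \<omega>' \<partial>S) - A \<omega>\<bar> \<le> \<delta>" if w: "\<omega> \<in> space S" for \<omega>
  proof -
    have "A \<omega> = (\<integral>\<omega>'. A \<omega> \<partial>S)"
      by (simp add: P.prob_space)
    moreover have "\<bar>(\<integral>\<omega>'. G \<omega> \<omega>' \<partial>S) - (\<integral>\<omega>'. A \<omega> \<partial>S)\<bar> \<le> \<delta>"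
      using w Gb Ab key by (intro int_close int_bnd[where B=1]) auto
    ultimately show ?thesis by metis
  qed
  have out1: "\<bar>(\<integral>\<omega>. (\<integral>\<omega>'. G \<omega> \<omega>' * C \<omega>' \<partial>S) \<partial>S) - (\<integral>\<omega>. A \<omega> * kap \<phi> \<partial>S)\<bar> \<le> \<delta>"
  proof (rule int_close[OF _ _ in1])
    show "integrable S (\<lambda>\<omega>. \<integral>\<omega>'. G \<omega> \<omega>' * C \<omega>' \<partial>S)"
    proof (rule int_bnd[OF meas1])
      fix \<omega> assume "\<omega> \<in> space S"
      then show "\<bar>\<integral>\<omega>'. G \<omega> \<omega>' * C \<omega>' \<partial>S\<bar> \<le> 1"
        using Gb Cb by (intro abs_int_le) (auto simp: abs_mult intro: mult_le_one)
    qed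
    show "integrable S (\<lambda>\<omega>. A \<omega> * kap \<phi>)"
      using Ab kap_bnd by (intro int_bnd[where B=1]) (auto simp: abs_mult intro: mult_le_one)
  qed
  have out2: "\<bar>(\<integral>\<omega>. (\<integral>\<omega>'. G \<omega> \<omega>' \<partial>S) \<partial>S) - (\<integral>\<omega>. A \<omega> \<partial>S)\<bar> \<le> \<delta>"
  proof (rule int_close[OF _ _ in2])
    show "integrable S (\<lambda>\<omega>. \<integral>\<omega>'. G \<omega> \<omega>' \<partial>S)"
    proof (rule int_bnd[OF meas2])
      fix \<omega> assume "\<omega> \<in> space S"
      then show "\<bar>\<integral>\<omega>'. G \<omega> \<omega>' \<partial>S\<bar> \<le> 1"
        using Gb by (intro abs_int_le) auto
    qed
    show "integrable S A"
      using Ab by (intro int_bnd[where B=1]) auto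
  qed
  have e3: "(\<integral>\<omega>. A \<omega> * kap \<phi> \<partial>S) = (\<integral>\<omega>. A \<omega> \<partial>S) * kap \<phi>"
    by simp
  define X where "X = (\<integral>\<omega>. (\<integral>\<omega>'. G \<omega> \<omega>' * C \<omega>' \<partial>S) \<partial>S)"
  define IA where "IA = (\<integral>\<omega>. A \<omega> \<partial>S)"
  have o1: "\<bar>X - IA * kap \<phi>\<bar> \<le> \<delta>" using out1 e3 by (simp add: X_def IA_def)
  have o2: "\<bar>kap \<phi> - IA\<bar> \<le> \<delta>" using out2 I2 by (simp add: IA_def)
  have "\<bar>X - kap \<phi> ^ 2\<bar> = \<bar>(X - IA * kap \<phi>) + kap \<phi> * (IA - kap \<phi>)\<bar>"
    by (simp add: power2_eq_square algebra_simps)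
  also have "\<dots> \<le> \<bar>X - IA * kap \<phi>\<bar> + \<bar>kap \<phi>\<bar> * \<bar>IA - kap \<phi>\<bar>"
    by (simp add: abs_mult[symmetric] abs_triangle_ineq)
  also have "\<dots> \<le> \<delta> + 1 * \<delta>"
    using o1 o2 kap_bnd by (intro add_mono mult_mono) (auto simp: abs_minus_commute)
  finally show ?thesis
    using I1 by (simp add: X_def \<delta>_def)
qed

lemma cov':
  "\<bar>(\<integral>\<omega>. cos (2 * pi * 2 ^ m * Y \<omega> + \<phi>) * cos (2 * pi * 2 ^ n * Y \<omega> + \<phi>) \<partial>S) - kap \<phi> ^ 2\<bar>
         \<le> 4 * pi * real q * (1/2) ^ (if m \<le> n then n - m else m - n)"
proof (cases "m \<le> n")
  case True
  then show ?thesis using cov[OF True, of \<phi>] by (simp add: power_divide)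
next
  case False
  then have "n \<le> m" by simp
  from cov[OF this, of \<phi>] False show ?thesis by (simp add: power_divide mult.commute)
qed

lemma var:
  "(\<integral>\<omega>. (\<Sum>n<N. cos (2 * pi * 2 ^ n * Y \<omega> + \<phi>) - kap \<phi>)\<^sup>2 \<partial>S) \<le> 12 * pi * real q * real N"
proof -
  define g where "g n \<omega> = cos (2 * pi * 2 ^ n * Y \<omega> + \<phi>) - kap \<phi>" for n \<omega>
  have gm[measurable]: "g n \<in> borel_measurable S" for n unfolding g_def by measurable
  have gb: "\<bar>g n \<omega>\<bar> \<le> 2" for n \<omega>
    using kap_bnd[of \<phi>] abs_cos_le_one[of "2 * pi * 2 ^ n * Y \<omega> + \<phi>"] unfolding g_def by linarith
  have gi: "integrable S (\<lambda>\<omega>. g m \<omega> * g n \<omega>)" for m n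
  proof (rule int_bnd[where B=4])
    fix \<omega>
    have "\<bar>g m \<omega>\<bar> * \<bar>g n \<omega>\<bar> \<le> 2 * 2" by (rule mult_mono) (use gb in auto)
    then show "\<bar>g m \<omega> * g n \<omega>\<bar> \<le> 4" by (simp add: abs_mult)
  qed simp
  have gi1: "integrable S (g n)" for n
    by (rule int_bnd[where B=2]) (use gb in auto)
  have sq: "(\<Sum>n<N. g n \<omega>)\<^sup>2 = (\<Sum>m<N. \<Sum>n<N. g m \<omega> * g n \<omega>)" for \<omega>
    by (simp add: power2_eq_square sum_product)
  have "(\<integral>\<omega>. (\<Sum>n<N. g n \<omega>)\<^sup>2 \<partial>S) = (\<Sum>m<N. \<Sum>n<N. (\<integral>\<omega>. g m \<omega> * g n \<omega> \<partial>S))"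
    unfolding sq using gi by (simp add: integral_sum integrable_sum)
  also have "\<dots> \<le> (\<Sum>m<N. \<Sum>n<N. 4 * pi * real q * (1/2) ^ (if m \<le> n then n - m else m - n))"
  proof (intro sum_mono)
    fix m n
    define gm' where "gm' = (\<lambda>\<omega>. cos (2 * pi * 2 ^ m * Y \<omega> + \<phi>))"
    define gn' where "gn' = (\<lambda>\<omega>. cos (2 * pi * 2 ^ n * Y \<omega> + \<phi>))"
    have [measurable]: "gm' \<in> borel_measurable S" "gn' \<in> borel_measurable S"
      unfolding gm'_def gn'_def by measurable
    have i1: "integrable S gm'" "integrable S gn'" "integrable S (\<lambda>\<omega>. gm' \<omega> * gn' \<omega>)"
      by (rule int_bnd[where B=1]; auto simp: gm'_def gn'_def abs_mult intro: mult_le_one)+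
    have "(\<integral>\<omega>. g m \<omega> * g n \<omega> \<partial>S)
        = (\<integral>\<omega>. gm' \<omega> * gn' \<omega> - kap \<phi> * gn' \<omega> - kap \<phi> * gm' \<omega> + kap \<phi> * kap \<phi> \<partial>S)"
      by (intro Bochner_Integration.integral_cong refl) (simp add: g_def gm'_def gn'_def algebra_simps)
    also have "\<dots> = (\<integral>\<omega>. gm' \<omega> * gn' \<omega> \<partial>S) - kap \<phi> * (\<integral>\<omega>. gn' \<omega> \<partial>S) - kap \<phi> * (\<integral>\<omega>. gm' \<omega> \<partial>S) + kap \<phi> * kap \<phi>"
      using i1 by (simp add: P.prob_space)
    also have "\<dots> = (\<integral>\<omega>. gm' \<omega> * gn' \<omega> \<partial>S) - kap \<phi> ^ 2"
      by (simp add: gm'_def gn'_def stat power2_eq_square)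
    finally have "(\<integral>\<omega>. g m \<omega> * g n \<omega> \<partial>S) = (\<integral>\<omega>. gm' \<omega> * gn' \<omega> \<partial>S) - kap \<phi> ^ 2" .
    then show "(\<integral>\<omega>. g m \<omega> * g n \<omega> \<partial>S) \<le> 4 * pi * real q * (1/2) ^ (if m \<le> n then n - m else m - n)"
      using cov'[of m \<phi> n] by (simp add: gm'_def gn'_def)
  qed
  also have "\<dots> = (\<Sum>m<N. 4 * pi * real q * (\<Sum>n<N. (1/2) ^ (if m \<le> n then n - m else m - n)))"
    by (simp add: sum_distrib_left)
  also have "\<dots> \<le> (\<Sum>m<N. 4 * pi * real q * 3)"
    by (intro sum_mono mult_left_mono geo) auto
  also have "\<dots> = 12 * pi * real q * real N" by simp
  finally show ?thesis by (simp add: g_def)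
qed

lemma split_int_c:
  fixes f :: "(nat \<Rightarrow> nat) \<Rightarrow> complex"
  assumes f[measurable]: "f \<in> borel_measurable S" and bnd: "\<And>\<omega>. norm (f \<omega>) \<le> B"
  shows "integral\<^sup>L S f = (\<integral>\<omega>. (\<integral>\<omega>'. f (comb_seq n \<omega> \<omega>') \<partial>S) \<partial>S)"
proof -
  interpret PS: pair_prob_space S S by (rule PS)
  have "integral\<^sup>L S f = integral\<^sup>L (distr (S \<Otimes>\<^sub>M S) S (\<lambda>(\<omega>, \<omega>'). comb_seq n \<omega> \<omega>')) f"
    by (simp add: PiM_comb_seq)
  also have "\<dots> = integral\<^sup>L (S \<Otimes>\<^sub>M S) (\<lambda>x. f ((\<lambda>(\<omega>, \<omega>'). comb_seq n \<omega> \<omega>') x))"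
    by (rule integral_distr[OF measurable_comb_seq f])
  also have "\<dots> = integral\<^sup>L (S \<Otimes>\<^sub>M S) (\<lambda>(\<omega>, \<omega>'). f (comb_seq n \<omega> \<omega>'))"
    by (simp add: case_prod_beta')
  also have "\<dots> = (\<integral>\<omega>. (\<integral>\<omega>'. f (comb_seq n \<omega> \<omega>') \<partial>S) \<partial>S)"
  proof (rule PS.integral_fst[symmetric])
    show "integrable (S \<Otimes>\<^sub>M S) (\<lambda>(\<omega>, \<omega>'). f (comb_seq n \<omega> \<omega>'))"
    proof (rule finite_measure.integrable_const_bound[where B=B])
      show "finite_measure (S \<Otimes>\<^sub>M S)"
        by (simp add: PS.P.finite_measure_axioms)
      show "AE x in S \<Otimes>\<^sub>M S. norm ((\<lambda>(\<omega>, \<omega>'). f (comb_seq n \<omega> \<omega>')) x) \<le> B"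
        using bnd by (auto simp: case_prod_beta')
      show "(\<lambda>(\<omega>, \<omega>'). f (comb_seq n \<omega> \<omega>')) \<in> borel_measurable (S \<Otimes>\<^sub>M S)"
        by measurable
    qed
  qed
  finally show ?thesis .
qed

lemma iter_int_c:
  fixes f :: "(nat \<Rightarrow> nat) \<Rightarrow> complex"
  assumes f[measurable]: "f \<in> borel_measurable S" and bnd: "\<And>\<omega>. norm (f \<omega>) \<le> B"
  shows "integral\<^sup>L S f = (\<integral>x. (\<integral>\<omega>. f (case_nat x \<omega>) \<partial>S) \<partial>U)"
proof -
  interpret PU: pair_prob_space U S
    by (simp add: pair_prob_space_def pair_sigma_finite_def S_prob U_prob prob_space_imp_sigma_finite)
  have cm: "(\<lambda>(s, \<omega>). case_nat s \<omega>) \<in> measurable (U \<Otimes>\<^sub>M S) S"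
    unfolding case_prod_beta' by measurable
  have "integral\<^sup>L S f = integral\<^sup>L (distr (U \<Otimes>\<^sub>M S) S (\<lambda>(s, \<omega>). case_nat s \<omega>)) f"
    by (simp add: PiM_iter)
  also have "\<dots> = integral\<^sup>L (U \<Otimes>\<^sub>M S) (\<lambda>x. f ((\<lambda>(s, \<omega>). case_nat s \<omega>) x))"
    by (rule integral_distr[OF cm f])
  also have "\<dots> = integral\<^sup>L (U \<Otimes>\<^sub>M S) (\<lambda>(x, \<omega>). f (case_nat x \<omega>))"
    by (simp add: case_prod_beta')
  also have "\<dots> = (\<integral>x. (\<integral>\<omega>. f (case_nat x \<omega>) \<partial>S) \<partial>U)"
  proof (rule PU.integral_fst[symmetric])
    show "integrable (U \<Otimes>\<^sub>M S) (\<lambda>(x, \<omega>). f (case_nat x \<omega>))"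
    proof (rule finite_measure.integrable_const_bound[where B=B])
      show "finite_measure (U \<Otimes>\<^sub>M S)"
        by (simp add: PU.P.finite_measure_axioms)
      show "AE x in U \<Otimes>\<^sub>M S. norm ((\<lambda>(x, \<omega>). f (case_nat x \<omega>)) x) \<le> B"
        using bnd by (auto simp: case_prod_beta')
      show "(\<lambda>(x, \<omega>). f (case_nat x \<omega>)) \<in> borel_measurable (U \<Otimes>\<^sub>M S)"
        using measurable_compose[OF cm f] by (simp add: case_prod_beta')
    qed
  qed
  finally show ?thesis .
qed

lemma Yp_Suc_case: "Yp (Suc s) (case_nat x \<omega>) = ev x / 2 + Yp s \<omega> / 2"
proof -
  have "Yp (Suc s) (case_nat x \<omega>) = ev x / 2 + (\<Sum>i<s. ev (\<omega> i) / 2 ^ Suc (Suc i))"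
    unfolding Yp_def by (subst sum.lessThan_Suc_shift) simp
  also have "(\<Sum>i<s. ev (\<omega> i) / 2 ^ Suc (Suc i)) = (\<Sum>i<s. ev (\<omega> i) / 2 ^ Suc i) / 2"
    by (simp add: sum_divide_distrib)
  finally show ?thesis by (simp add: Yp_def)
qed

lemma U_int: "integral\<^sup>L U (f :: nat \<Rightarrow> complex) = (f 0 + f 1 + f 2) / 3"
  unfolding U_def uniform_count_measure_def
  by (subst lebesgue_integral_point_measure_finite) (simp_all add: add_divide_distrib scaleR_conv_of_real)

definition Pc :: "nat \<Rightarrow> real \<Rightarrow> complex" where
  "Pc s t = (\<integral>\<omega>. cis (t * Yp s \<omega>) \<partial>S)"

lemma Pc_Suc: "Pc (Suc s) t = ((1 + cis (t / 2 * real q) + cis (t / 2 * real p)) / 3) * Pc s (t / 2)"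
proof -
  have "Pc (Suc s) t = (\<integral>x. (\<integral>\<omega>. cis (t * Yp (Suc s) (case_nat x \<omega>)) \<partial>S) \<partial>U)"
    unfolding Pc_def by (rule iter_int_c[where B=1]) auto
  also have "\<dots> = (\<integral>x. cis (t / 2 * ev x) * Pc s (t / 2) \<partial>U)"
  proof -
    have "cis (t * Yp (Suc s) (case_nat x \<omega>)) = cis (t / 2 * ev x) * cis (t / 2 * Yp s \<omega>)" for x \<omega>
      by (simp add: Yp_Suc_case cis_mult algebra_simps)
    then show ?thesis by (simp add: Pc_def)
  qed
  also have "\<dots> = ((1 + cis (t / 2 * real q) + cis (t / 2 * real p)) / 3) * Pc s (t / 2)"
    by (simp add: U_int ev_def algebra_simps add_divide_distrib)
  finally show ?thesis .
qed

lemma Pc_ne: "Pc s (2 * pi / 2 ^ j) \<noteq> 0"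
proof (induction s arbitrary: j)
  case 0
  then show ?case by (simp add: Pc_def Yp_def P.prob_space)
next
  case (Suc s)
  have a: "2 * pi / 2 ^ j / 2 = 2 * pi / 2 ^ Suc j" by simp
  have "1 + cis (2 * pi / 2 ^ Suc j * real q) + cis (2 * pi / 2 ^ Suc j * real p) \<noteq> 0"
  proof (rule three_ne)
    show "cos (2 * pi / 2 ^ Suc j * real q) \<noteq> - 1 / 2"
      using cos_dyadic[of q "Suc j"] by (simp add: mult.commute mult.left_commute)
  qed
  then show ?case using Suc[of "Suc j"] by (simp add: Pc_Suc a)
qed

lemma cis_int: "f \<in> borel_measurable S \<Longrightarrow> integrable S (\<lambda>\<omega>. cis (f \<omega>))"
  by (rule P.integrable_const_bound[where B=1]) auto

lemma Z_ne: "(\<integral>\<omega>. cis (2 * pi * Y \<omega>) \<partial>S) \<noteq> 0"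
proof -
  define s where "s = 4 * q"
  have "4 * q < 2 ^ s" unfolding s_def
    by (metis less_exp mult.commute mult_2_right numeral_Bit0 power_mult power2_eq_square
        less_le_trans order_refl) 
  then have s: "4 * real q < 2 ^ s"
    by (metis of_nat_less_iff of_nat_mult of_nat_numeral of_nat_power)
  define W where "W = (\<integral>\<omega>'. cis (2 * pi * (Y \<omega>' / 2 ^ s)) \<partial>S)"
  have "(\<integral>\<omega>. cis (2 * pi * Y \<omega>) \<partial>S) = (\<integral>\<omega>. (\<integral>\<omega>'. cis (2 * pi * Y (comb_seq s \<omega> \<omega>')) \<partial>S) \<partial>S)"
    by (rule split_int_c[where B=1]) auto
  also have "\<dots> = (\<integral>\<omega>. cis (2 * pi * Yp s \<omega>) * W \<partial>S)"
  proof -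
    have "cis (2 * pi * Y (comb_seq s \<omega> \<omega>')) = cis (2 * pi * Yp s \<omega>) * cis (2 * pi * (Y \<omega>' / 2 ^ s))" for \<omega> \<omega>'
      by (simp add: Y_comb cis_mult distrib_left)
    then show ?thesis by (simp add: W_def)
  qed
  also have "\<dots> = Pc s (2 * pi) * W"
    by (simp add: Pc_def)
  finally have Z: "(\<integral>\<omega>. cis (2 * pi * Y \<omega>) \<partial>S) = Pc s (2 * pi) * W" .
  have P0: "Pc s (2 * pi) \<noteq> 0" using Pc_ne[of s 0] by simp
  define c0 where "c0 = cos (2 * pi * (real q / 2 ^ s))"
  have c0: "0 < c0" unfolding c0_def
  proof (rule cos_gt_zero_pi)
    have "0 \<le> 2 * pi * (real q / 2 ^ s)" by simp
    then show "- (pi / 2) < 2 * pi * (real q / 2 ^ s)" using pi_gt_zero by linarith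
    have "real q / 2 ^ s < 1 / 4" using s by (simp add: field_simps)
    then have "2 * pi * (real q / 2 ^ s) < 2 * pi * (1/4)"
      using pi_gt_zero by (intro mult_strict_left_mono) auto
    then show "2 * pi * (real q / 2 ^ s) < pi / 2" by simp
  qed
  have "Re W = (\<integral>\<omega>'. Re (cis (2 * pi * (Y \<omega>' / 2 ^ s))) \<partial>S)"
    unfolding W_def by (intro integral_Re[symmetric] cis_int) measurable
  also have "\<dots> = (\<integral>\<omega>'. cos (2 * pi * (Y \<omega>' / 2 ^ s)) \<partial>S)"
    by simp
  also have "\<dots> \<ge> (\<integral>\<omega>'. c0 \<partial>S)"
  proof (rule integral_mono)
    show "integrable S (\<lambda>\<omega>'. cos (2 * pi * (Y \<omega>' / 2 ^ s)))"
      by (rule int_bnd[where B=1]) auto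
    show "integrable S (\<lambda>\<omega>'. c0)" by simp
    fix \<omega>'
    have "2 * pi * (Y \<omega>' / 2 ^ s) \<le> 2 * pi * (real q / 2 ^ s)"
      using Y_le by (intro mult_left_mono divide_right_mono) auto
    moreover have "2 * pi * (real q / 2 ^ s) \<le> pi"
    proof -
      have "real q / 2 ^ s \<le> 1 / 2" using s by (simp add: field_simps)
      then have "2 * pi * (real q / 2 ^ s) \<le> 2 * pi * (1/2)"
        using pi_gt_zero by (intro mult_left_mono) auto
      then show ?thesis by simp
    qed
    moreover have "0 \<le> 2 * pi * (Y \<omega>' / 2 ^ s)" using Y_nonneg by simp
    ultimately show "c0 \<le> cos (2 * pi * (Y \<omega>' / 2 ^ s))"
      unfolding c0_def by (intro cos_monotone_0_pi_le) auto
  qed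
  finally have "c0 \<le> Re W" by (simp add: P.prob_space)
  then have "W \<noteq> 0" using c0 by auto
  with P0 Z show ?thesis by simp
qed

lemma kap_ex: "\<exists>\<phi>. kap \<phi> \<noteq> 0"
proof (rule ccontr)
  assume "\<not> (\<exists>\<phi>. kap \<phi> \<noteq> 0)"
  then have k0: "kap 0 = 0" and k1: "kap (pi / 2) = 0" by auto
  define Z where "Z = (\<integral>\<omega>. cis (2 * pi * Y \<omega>) \<partial>S)"
  have "Re Z = (\<integral>\<omega>. Re (cis (2 * pi * Y \<omega>)) \<partial>S)"
    unfolding Z_def by (intro integral_Re[symmetric] cis_int) measurable
  then have "Re Z = kap 0" by (simp add: kap_def)
  moreover have "Im Z = - kap (pi / 2)"
  proof -
    have "Im Z = (\<integral>\<omega>. Im (cis (2 * pi * Y \<omega>)) \<partial>S)"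
      unfolding Z_def by (intro integral_Im[symmetric] cis_int) measurable
    then show ?thesis by (simp add: kap_def cos_add)
  qed
  ultimately have "Z = 0" using k0 k1 by (simp add: complex_eq_iff)
  with Z_ne show False by (simp add: Z_def)
qed

definition X :: "(nat \<Rightarrow> nat) \<Rightarrow> real" where
  "X \<omega> = (\<Sum>i. digit p q (\<omega> i) / 2 ^ Suc i)"

lemma X_Y: "X \<omega> = Y \<omega> / real q"
proof -
  have "digit p q k = ev k / real q" for k
    using qpos by (simp add: digit_def ev_def)
  then have "X \<omega> = (\<Sum>i. (ev (\<omega> i) / 2 ^ Suc i) / real q)"
    unfolding X_def by (intro suminf_cong) (simp add: mult.commute)
  also have "\<dots> = Y \<omega> / real q"
    unfolding Y_def by (rule suminf_divide[OF summ])
  finally show ?thesis .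
qed

lemma qX: "real q * X \<omega> = Y \<omega>"
  using qpos by (simp add: X_Y)

lemma X_meas[measurable]: "X \<in> borel_measurable S"
  unfolding X_Y by measurable

lemma X_01: "X \<omega> \<in> {0..1}"
  using Y_nonneg[of \<omega>] Y_le[of \<omega>] qpos by (simp add: X_Y field_simps)

lemma mu_eq: "mu p q = distr S borel X"
  unfolding mu_def U_def X_def[abs_def] ..

lemma mu_prob: "prob_space (mu p q)"
  unfolding mu_eq by (rule prob_space.prob_space_distr[OF S_prob]) simp

lemma bounds:
  assumes k: "kap \<phi> \<noteq> 0" and N: "0 < N"
  defines "c \<equiv> (real N * \<bar>kap \<phi>\<bar> / 2)\<^sup>2"
  defines "E \<equiv> {x. c \<le> indicator {0..1} x * (Ls q N \<phi> x)\<^sup>2}"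
  shows "E \<in> sets borel"
    and "emeasure lborel E \<le> ennreal (2 / (real N * (kap \<phi>)\<^sup>2))"
    and "emeasure (mu p q) (UNIV - E) \<le> ennreal (48 * pi * real q / (real N * (kap \<phi>)\<^sup>2))"
proof -
  have c: "0 < c" unfolding c_def using k N by simp
  have c': "1 / c = 4 / (real N ^ 2 * (kap \<phi>)\<^sup>2)"
    unfolding c_def by (simp add: power_mult_distrib power2_abs field_simps)
  have [measurable]: "(\<lambda>x. indicator {0..1} x * (Ls q N \<phi> x)\<^sup>2) \<in> borel_measurable borel"
    unfolding Ls_def by measurable
  show Em: "E \<in> sets borel" unfolding E_def by measurable
  have "emeasure lborel {x \<in> space lborel. indicator {0..1} x * (Ls q N \<phi> x)\<^sup>2 \<ge> c}
      \<le> (1 / c) * (\<integral>x. indicator {0..1} x * (Ls q N \<phi> x)\<^sup>2 \<partial>lborel)"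
    by (rule integral_Markov_inequality[OF L2_lborel(1)[OF qpos] _ c]) auto
  also have "\<dots> = ennreal (2 / (real N * (kap \<phi>)\<^sup>2))"
    unfolding L2_lborel(2)[OF qpos] c' using N by (simp add: power2_eq_square field_simps)
  finally show "emeasure lborel E \<le> ennreal (2 / (real N * (kap \<phi>)\<^sup>2))"
    by (simp add: E_def)
  define V where "V \<omega> = (\<Sum>n<N. cos (2 * pi * 2 ^ n * Y \<omega> + \<phi>) - kap \<phi>)\<^sup>2" for \<omega>
  have [measurable]: "V \<in> borel_measurable S" unfolding V_def by measurable
  have Vi: "integrable S V"
  proof (rule int_bnd[where B="(2 * real N)\<^sup>2"])
    fix \<omega>
    have "\<bar>\<Sum>n<N. cos (2 * pi * 2 ^ n * Y \<omega> + \<phi>) - kap \<phi>\<bar> \<le> (\<Sum>n<N. \<bar>cos (2 * pi * 2 ^ n * Y \<omega> + \<phi>) - kap \<phi>\<bar>)"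
      by (rule sum_abs)
    also have "\<dots> \<le> (\<Sum>n<N. 2)"
    proof (rule sum_mono)
      fix n
      show "\<bar>cos (2 * pi * 2 ^ n * Y \<omega> + \<phi>) - kap \<phi>\<bar> \<le> 2"
        using kap_bnd[of \<phi>] abs_cos_le_one[of "2 * pi * 2 ^ n * Y \<omega> + \<phi>"] by linarith
    qed
    finally have "\<bar>\<Sum>n<N. cos (2 * pi * 2 ^ n * Y \<omega> + \<phi>) - kap \<phi>\<bar> \<le> \<bar>2 * real N\<bar>" by simp
    then show "\<bar>V \<omega>\<bar> \<le> (2 * real N)\<^sup>2"
      unfolding V_def abs_power2 by (rule abs_le_square_iff[THEN iffD1])
  qed simp
  have "emeasure (mu p q) (UNIV - E) = emeasure S (X -` (UNIV - E) \<inter> space S)"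
    unfolding mu_eq using Em by (intro emeasure_distr) auto
  also have "\<dots> \<le> emeasure S {\<omega> \<in> space S. V \<omega> \<ge> c}"
  proof (rule emeasure_mono)
    show "{\<omega> \<in> space S. V \<omega> \<ge> c} \<in> sets S" by measurable
    show "X -` (UNIV - E) \<inter> space S \<subseteq> {\<omega> \<in> space S. V \<omega> \<ge> c}"
    proof safe
      fix \<omega> assume w: "\<omega> \<in> space S" and nE: "X \<omega> \<notin> E"
      define T where "T = (\<Sum>n<N. cos (2 * pi * 2 ^ n * Y \<omega> + \<phi>))"
      have LT: "Ls q N \<phi> (X \<omega>) = T"
        unfolding Ls_def T_def qX ..
      have "\<not> c \<le> (Ls q N \<phi> (X \<omega>))\<^sup>2"
        using nE X_01[of \<omega>] unfolding E_def by simp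
      then have "T\<^sup>2 < (\<bar>real N * kap \<phi>\<bar> / 2)\<^sup>2"
        unfolding LT c_def using N by (simp add: abs_mult)
      then have "(\<bar>real N * kap \<phi>\<bar> / 2)\<^sup>2 \<le> (T - real N * kap \<phi>)\<^sup>2"
        by (intro sq_aux) auto
      moreover have "V \<omega> = (T - real N * kap \<phi>)\<^sup>2"
        unfolding V_def T_def by (simp add: sum_subtractf)
      ultimately show "c \<le> V \<omega>"
        unfolding c_def using N by (simp add: abs_mult)
    qed
  qed
  also have "\<dots> \<le> (1 / c) * (\<integral>\<omega>. V \<omega> \<partial>S)"
    by (rule integral_Markov_inequality[OF Vi _ c]) (auto simp: V_def)
  also have "\<dots> \<le> ennreal ((1 / c) * (12 * pi * real q * real N))"
  proof -
    have "(1 / c) * (\<integral>\<omega>. V \<omega> \<partial>S) \<le> (1 / c) * (12 * pi * real q * real N)"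
      using c var[where N=N and \<phi>=\<phi>] unfolding V_def by (intro mult_left_mono) auto
    then show ?thesis by (rule ennreal_leI)
  qed
  also have "(1 / c) * (12 * pi * real q * real N) = 48 * pi * real q / (real N * (kap \<phi>)\<^sup>2)"
    unfolding c' using N by (simp add: power2_eq_square field_simps)
  finally show "emeasure (mu p q) (UNIV - E) \<le> ennreal (48 * pi * real q / (real N * (kap \<phi>)\<^sup>2))" .
qed

lemma meas_le: "emeasure M A \<le> ennreal r \<Longrightarrow> 0 \<le> r \<Longrightarrow> measure M A \<le> r"
  unfolding measure_def using enn2real_mono[of "emeasure M A" "ennreal r"] by simp

lemma main: "singular_lebesgue (mu p q)"
proof -
  obtain \<phi> where k: "kap \<phi> \<noteq> 0" using kap_ex by blast
  define K where "K = (kap \<phi>)\<^sup>2"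
  have K: "0 < K" using k by (simp add: K_def)
  define A where "A k = {x. (real (2 ^ k) * \<bar>kap \<phi>\<bar> / 2)\<^sup>2 \<le> indicator {0..1} x * (Ls q (2 ^ k) \<phi> x)\<^sup>2}" for k :: nat
  have b1: "A k \<in> sets borel" for k
    using bounds(1)[OF k, of "2 ^ k"] unfolding A_def by simp
  have b2: "emeasure lborel (A k) \<le> ennreal (2 / K * (1/2) ^ k)" for k
    using bounds(2)[OF k, of "2 ^ k"] unfolding A_def K_def by (simp add: power_one_over field_simps)
  have b3: "emeasure (mu p q) (UNIV - A k) \<le> ennreal (48 * pi * real q / K * (1/2) ^ k)" for k
    using bounds(3)[OF k, of "2 ^ k"] unfolding A_def K_def by (simp add: power_one_over field_simps)
  have sm: "sets (mu p q) = sets borel" by (simp add: mu_eq)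
  have geo2: "summable (\<lambda>k. C * (1/2::real) ^ k)" for C
    by (intro summable_mult summable_geometric) simp
  have nA: "limsup A \<in> null_sets lborel"
  proof (rule borel_cantelli_limsup1)
    show "A n \<in> sets lborel" for n using b1 by simp
    show "emeasure lborel (A n) < \<infinity>" for n
      using b2[of n] by (simp add: le_less_trans)
    show "summable (\<lambda>n. measure lborel (A n))"
    proof (rule summable_comparison_test[OF _ geo2[of "2 / K"]])
      show "\<exists>N. \<forall>n\<ge>N. norm (measure lborel (A n)) \<le> 2 / K * (1 / 2) ^ n"
        using b2 K by (auto intro!: meas_le)
    qed
  qed
  have nB: "limsup (\<lambda>k. UNIV - A k) \<in> null_sets (mu p q)"
  proof (rule borel_cantelli_limsup1)
    show "UNIV - A n \<in> sets (mu p q)" for n using b1 sm by auto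
    show "emeasure (mu p q) (UNIV - A n) < \<infinity>" for n
      using b3[of n] by (simp add: le_less_trans)
    show "summable (\<lambda>n. measure (mu p q) (UNIV - A n))"
    proof (rule summable_comparison_test[OF _ geo2[of "48 * pi * real q / K"]])
      show "\<exists>N. \<forall>n\<ge>N. norm (measure (mu p q) (UNIV - A n)) \<le> 48 * pi * real q / K * (1 / 2) ^ n"
        using b3 K by (auto intro!: meas_le)
    qed
  qed
  define F where "F = UNIV - limsup A"
  have F: "F \<in> sets borel"
  proof -
    have "limsup A \<in> sets borel" using b1 by (rule measurable_limsup)
    then have "space borel - limsup A \<in> sets borel" by (rule sets.compl_sets)
    then show ?thesis unfolding F_def by simp
  qed
  have "emeasure (mu p q) F \<le> emeasure (mu p q) (limsup (\<lambda>k. UNIV - A k))"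
    using nB limsup_compl[of A] unfolding F_def by (intro emeasure_mono) auto
  then have "emeasure (mu p q) F = 0" using nB by auto
  moreover have "emeasure lborel (UNIV - F) = 0"
    using nA unfolding F_def by (simp add: double_diff null_setsD1)
  ultimately show ?thesis unfolding singular_lebesgue_def using F by blast
qed

end

theorem theorem4p1:
  fixes p q :: nat
  assumes "coprime p q" and "q > 0" and "p \<le> q"
  shows "singular_lebesgue (mu p q)"
proof -
  interpret dig p q using assms by unfold_locales auto
  show ?thesis by (rule main)
qed

end
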